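(* Let $n\ge2$ and let $G=\{G_1,\ldots,G_t\}\subseteq\mathrm{H}(n,\mathbb{Q}(\mathrm{i}))$ be such that every $G_i$ is non-redundant. Suppose there exist $M_1,M_2,M_3,M_4\in G$ such that $[M_1,M_2]$ and $[M_3,M_4]$ do not have the same angle, i.e. both are nonzero and $[M_1,M_2]\notin\mathbb{R}\cdot[M_3,M_4]$. Then $\boldsymbol{I}_n\in\langle G\rangle$.
   Context: $\mathbb{Q}(\mathrm{i})=\{a+b\mathrm{i}\mid a,b\in\mathbb{Q}\}$. $\mathrm{H}(n,\mathbb{Q}(\mathrm{i}))$ is the set of $n\times n$ matrices $M=\begin{pmatrix}1&\boldsymbol{m}_1^T&m_3\\ \boldsymbol{0}&\boldsymbol{I}_{n-2}&\boldsymbol{m}_2\\ 0&\boldsymbol{0}^T&1\end{pmatrix}$ with $\boldsymbol{m}_1,\boldsymbol{m}_2\in\mathbb{Q}(\mathrm{i})^{n-2}$, $m_3\in\mathbb{Q}(\mathrm{i})$; write $\psi(M)=(\boldsymbol{m}_1,\boldsymbol{m}_2,m_3)$. For $\psi(M)=(\boldsymbol{a},\boldsymbol{b},c)$, $\psi(M')=(\boldsymbol{a}',\boldsymbol{b}',c')$, the commutator is the scalar $[M,M']=\boldsymbol{a}^T\boldsymbol{b}'-\boldsymbol{a}'^T\boldsymbol{b}\in\mathbb{Q}(\mathrm{i})$. Two commutators have the same angle if they are real multiples of each other's direction, i.e. $[M_1,M_2]=r\exp(\mathrm{i}\gamma)$ and $[M_3,M_4]=r'\exp(\mathrm{i}\gamma)$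 for some $r,r'\in\mathbb{R}$ and $\gamma\in[0,\pi)$; by convention a zero commutator has the same angle as every commutator. With $\psi(G_j)=(\boldsymbol{a}_j,\boldsymbol{b}_j,c_j)$, a generator $G_i$ is non-redundant if there exists $\boldsymbol{x}\in\mathbb{N}^t$ with $\boldsymbol{x}(i)\ge1$, $\sum_j\boldsymbol{x}(j)\boldsymbol{a}_j=\boldsymbol{0}$ and $\sum_j\boldsymbol{x}(j)\boldsymbol{b}_j=\boldsymbol{0}$ (equivalently, $G_i$ has a nonzero $i$-th component in some minimal solution of this homogeneous system). $\langle G\rangle$ is the semigroup of finite nonempty products of elements of $G$. *)

theory Defs
  imports Complex_Main "Jordan_Normal_Form.Matrix"
begin

definition gauss_rat :: "complex \<Rightarrow> bool" where
  "gauss_rat z \<longleftrightarrow> Re z \<in> \<rat> \<and> Im z \<in> \<rat>"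

definition heis :: "nat \<Rightarrow> complex mat set" where
  "heis n = {M. M \<in> carrier_mat n n \<and>
     (\<forall>i<n. \<forall>j<n.
        (if i = j then M $$ (i, j) = 1
         else if i = 0 \<or> j = n - 1 then gauss_rat (M $$ (i, j))
         else M $$ (i, j) = 0))}"

text \<open>psi(M) = (m1, m2, m3); vectors m1, m2 indexed by k = 1..n-2.\<close>
definition psi_a :: "nat \<Rightarrow> complex mat \<Rightarrow> nat \<Rightarrow> complex" where
  "psi_a n M k = M $$ (0, k)"
definition psi_b :: "nat \<Rightarrow> complex mat \<Rightarrow> nat \<Rightarrow> complex" where
  "psi_b n M k = M $$ (k, n - 1)"
definition psi_c :: "nat \<Rightarrow> complex mat \<Rightarrow> complex" where
  "psi_c n M = M $$ (0, n - 1)"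

definition heis_comm :: "nat \<Rightarrow> complex mat \<Rightarrow> complex mat \<Rightarrow> complex" where
  "heis_comm n M M' =
     (\<Sum>k\<in>{1..n-2}. psi_a n M k * psi_b n M' k) -
     (\<Sum>k\<in>{1..n-2}. psi_a n M' k * psi_b n M k)"

definition same_angle :: "complex \<Rightarrow> complex \<Rightarrow> bool" where
  "same_angle z w \<longleftrightarrow> z = 0 \<or> w = 0 \<or>
     (\<exists>r r' :: real. \<exists>\<gamma>. 0 \<le> \<gamma> \<and> \<gamma> < pi \<and>
        z = complex_of_real r * cis \<gamma> \<and> w = complex_of_real r' * cis \<gamma>)"

definition non_redundant :: "nat \<Rightarrow> nat \<Rightarrow> (nat \<Rightarrow> complex mat) \<Rightarrow> nat \<Rightarrow> bool" where
  "non_redundant n t G i \<longleftrightarrow>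
     (\<exists>x :: nat \<Rightarrow> nat. x i \<ge> 1 \<and>
        (\<forall>k\<in>{1..n-2}. (\<Sum>j<t. of_nat (x j) * psi_a n (G j) k) = 0) \<and>
        (\<forall>k\<in>{1..n-2}. (\<Sum>j<t. of_nat (x j) * psi_b n (G j) k) = 0))"

inductive_set gen_semigroup :: "complex mat set \<Rightarrow> complex mat set"
  for S :: "complex mat set" where
  base: "M \<in> S \<Longrightarrow> M \<in> gen_semigroup S"
| step: "A \<in> gen_semigroup S \<Longrightarrow> M \<in> S \<Longrightarrow> A * M \<in> gen_semigroup S"

end

theory Submission
  imports Defs
begin


lemma gr_add: "gauss_rat z \<Longrightarrow> gauss_rat w \<Longrightarrow> gauss_rat (z + w)"
  by (simp add: gauss_rat_def)
lemma gr_diff: "gauss_rat z \<Longrightarrow> gauss_rat w \<Longrightarrow> gauss_rat (z - w)"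
  by (simp add: gauss_rat_def)
lemma gr_mult: "gauss_rat z \<Longrightarrow> gauss_rat w \<Longrightarrow> gauss_rat (z * w)"
  by (simp add: gauss_rat_def)
lemma gr_0: "gauss_rat 0" by (simp add: gauss_rat_def)
lemma gr_of_nat: "gauss_rat (of_nat m)" by (simp add: gauss_rat_def)
lemma gr_sum: "(\<And>x. x \<in> A \<Longrightarrow> gauss_rat (f x)) \<Longrightarrow> gauss_rat (sum f A)"
  by (induction A rule: infinite_finite_induct) (auto simp: gr_0 gr_add)

lemma cis_half: "\<exists>r \<gamma>. 0 \<le> \<gamma> \<and> \<gamma> < pi \<and> z = complex_of_real r * cis \<gamma>"
proof -
  have z: "z = complex_of_real (cmod z) * cis (Arg z)"
    by (metis rcis_cmod_Arg rcis_def)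
  have ab: "- pi < Arg z" "Arg z \<le> pi" using Arg_bounded[of z] by auto
  show ?thesis
  proof (cases "0 \<le> Arg z \<and> Arg z < pi")
    case True then show ?thesis using z by blast
  next
    case False
    show ?thesis
    proof (cases "Arg z = pi")
      case True
      have "z = complex_of_real (- cmod z) * cis 0" using z True by simp
      then show ?thesis by (intro exI[of _ "- cmod z"] exI[of _ 0]) auto
    next
      case f2: False
      then have neg: "Arg z < 0" using False ab by auto
      have "cis (Arg z + pi) = - cis (Arg z)" by (simp add: cis_def complex_eq_iff)
      then have "z = complex_of_real (- cmod z) * cis (Arg z + pi)" using z by simp
      then show ?thesis using neg ab by (intro exI[of _ "- cmod z"] exI[of _ "Arg z + pi"]) auto
    qed
  qed
qed

lemma not_same_angle_Im:
  assumes "\<not> same_angle z1 z3"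
  shows "Im (z1 * cnj z3) \<noteq> 0"
proof
  assume I: "Im (z1 * cnj z3) = 0"
  have nz: "z1 \<noteq> 0" "z3 \<noteq> 0" using assms by (auto simp: same_angle_def)
  obtain r' \<gamma> where g: "0 \<le> \<gamma>" "\<gamma> < pi" and z3: "z3 = complex_of_real r' * cis \<gamma>"
    using cis_half by blast
  have "Im (z1 * cnj z3) = r' * Im (z1 * cis (-\<gamma>))"
    unfolding z3 by (simp add: cis_cnj algebra_simps)
  moreover have "r' \<noteq> 0" using nz z3 by auto
  ultimately have I2: "Im (z1 * cis (-\<gamma>)) = 0" using I by simp
  define r where "r = Re (z1 * cis (-\<gamma>))"
  have "z1 * cis (-\<gamma>) = complex_of_real r" using I2 by (simp add: r_def complex_eq_iff)
  moreover have "z1 = (z1 * cis (-\<gamma>)) * cis \<gamma>" by (simp add: mult.assoc cis_mult)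
  ultimately have "z1 = complex_of_real r * cis \<gamma>" by simp
  then have "same_angle z1 z3" using g z3 unfolding same_angle_def by blast
  then show False using assms by simp
qed

lemma decomp:
  assumes d: "Im (z1 * cnj z3) \<noteq> 0" and g: "gauss_rat z1" "gauss_rat z3" "gauss_rat w"
  shows "\<exists>Q P1 P3. Q > (0::int) \<and> of_int Q * w = of_int P1 * z1 + of_int P3 * z3"
proof -
  define \<delta> where "\<delta> = Im z1 * Re z3 - Re z1 * Im z3"
  have dd: "\<delta> \<noteq> 0" using d by (simp add: \<delta>_def)
  define g1 where "g1 = (Im w * Re z3 - Re w * Im z3) / \<delta>"
  define g3 where "g3 = (Im z1 * Re w - Re z1 * Im w) / \<delta>"
  have q: "g1 \<in> \<rat>" "g3 \<in> \<rat>" using g unfolding g1_def g3_def \<delta>_def gauss_rat_def by auto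
  have r: "Re w = g1 * Re z1 + g3 * Re z3"
  proof -
    have "(g1 * Re z1 + g3 * Re z3) * \<delta> = Re w * \<delta>"
      unfolding g1_def g3_def using dd by (simp add: field_simps) (simp add: \<delta>_def algebra_simps)
    then show ?thesis using dd by simp
  qed
  have i: "Im w = g1 * Im z1 + g3 * Im z3"
  proof -
    have "(g1 * Im z1 + g3 * Im z3) * \<delta> = Im w * \<delta>"
      unfolding g1_def g3_def using dd by (simp add: field_simps) (simp add: \<delta>_def algebra_simps)
    then show ?thesis using dd by simp
  qed
  have e: "w = complex_of_real g1 * z1 + complex_of_real g3 * z3"
    using r i by (simp add: complex_eq_iff)
  obtain a1 b1 where b1: "b1 > 0" "g1 = of_int a1 / of_int b1" using q(1) by (metis Rats_cases')
  obtain a3 b3 where b3: "b3 > 0" "g3 = of_int a3 / of_int b3" using q(2) by (metis Rats_cases')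
  have "of_int (b1*b3) * w = of_int (a1*b3) * z1 + of_int (a3*b1) * z3"
    unfolding e b1 b3 using b1(1) b3(1) by (simp add: field_simps)
  then show ?thesis using b1 b3 by (intro exI[of _ "b1*b3"] exI[of _ "a1*b3"] exI[of _ "a3*b1"]) simp
qed




definition hm :: "nat \<Rightarrow> (nat\<Rightarrow>complex) \<Rightarrow> (nat\<Rightarrow>complex) \<Rightarrow> complex \<Rightarrow> complex mat" where
 "hm n a b c = mat n n (\<lambda>(i,j). if i = j then 1 else if i = 0 \<and> j = n-1 then c
     else if i = 0 then a j else if j = n-1 then b i else 0)"

lemma hm_carrier[simp]: "hm n a b c \<in> carrier_mat n n"
  by (simp add: hm_def)

lemma lessThan_split3:
  assumes "(n::nat) \<ge> 2" shows "{..<n} = insert 0 (insert (n-1) {1..n-2})"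
  using assms by auto

lemma sum_split3:
  assumes n: "(n::nat) \<ge> 2"
  shows "(\<Sum>l\<in>{..<n}. f l) = f 0 + f (n-1) + (\<Sum>l\<in>{1..n-2}. f l)"
proof -
  have h1: "n-1 \<notin> {1..n-2}" and h0: "0 \<notin> insert (n-1) {1..n-2}" using n by auto
  have "(\<Sum>l\<in>{..<n}. f l) = (\<Sum>l\<in>insert 0 (insert (n-1) {1..n-2}). f l)"
    unfolding lessThan_split3[OF n] ..
  also have "\<dots> = f 0 + (f (n-1) + (\<Sum>l\<in>{1..n-2}. f l))"
    using sum.insert[OF finite_atLeastAtMost h1, of f]
      sum.insert[OF finite_insert[THEN iffD2, OF finite_atLeastAtMost] h0, of f] by simp
  finally show ?thesis by (simp add: add.assoc)
qed

lemma hm_mult: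
  assumes n: "n \<ge> 2"
  shows "hm n a b c * hm n a' b' c' =
    hm n (\<lambda>k. a k + a' k) (\<lambda>k. b k + b' k) (c + c' + (\<Sum>k\<in>{1..n-2}. a k * b' k))"
proof (rule eq_matI)
  fix i j assume i: "i < dim_row (hm n (\<lambda>k. a k + a' k) (\<lambda>k. b k + b' k) (c + c' + (\<Sum>k\<in>{1..n-2}. a k * b' k)))"
    and j: "j < dim_col (hm n (\<lambda>k. a k + a' k) (\<lambda>k. b k + b' k) (c + c' + (\<Sum>k\<in>{1..n-2}. a k * b' k)))"
  have i': "i < n" and j': "j < n" using i j by (auto simp: hm_def)
  let ?A = "hm n a b c" and ?B = "hm n a' b' c'"
  have "(?A * ?B) $$ (i,j) = (\<Sum>l\<in>{..<n}. ?A $$ (i,l) * ?B $$ (l,j))"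
    using i' j' by (simp add: scalar_prod_def times_mat_def hm_def atLeast0LessThan)
  also have "\<dots> = ?A $$ (i,0) * ?B $$ (0,j) + ?A $$ (i,n-1) * ?B $$ (n-1,j)
      + (\<Sum>l\<in>{1..n-2}. ?A $$ (i,l) * ?B $$ (l,j))"
    by (rule sum_split3[OF n])
  also have "(\<Sum>l\<in>{1..n-2}. ?A $$ (i,l) * ?B $$ (l,j)) =
     (\<Sum>l\<in>{1..n-2}. (if i = l then 1 else if i = 0 then a l else 0) *
                       (if l = j then 1 else if j = n-1 then b' l else 0))"
    using n i' j' by (intro sum.cong) (auto simp: hm_def)
  finally have e: "(?A * ?B) $$ (i,j) = ?A $$ (i,0) * ?B $$ (0,j) + ?A $$ (i,n-1) * ?B $$ (n-1,j)
      + (\<Sum>l\<in>{1..n-2}. (if i = l then 1 else if i = 0 then a l else 0) *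
                       (if l = j then 1 else if j = n-1 then b' l else 0))" .
  show "(?A * ?B) $$ (i,j) = hm n (\<lambda>k. a k + a' k) (\<lambda>k. b k + b' k) (c + c' + (\<Sum>k\<in>{1..n-2}. a k * b' k)) $$ (i,j)"
  proof -
    consider "i = 0" | "i = n-1" | "i \<in> {1..n-2}" using i' n by force
    then show ?thesis
    proof cases
      case 1
      have s: "(\<Sum>l\<in>{1..n-2}. (if i = l then 1 else if i = 0 then a l else 0) *
                       (if l = j then 1 else if j = n-1 then b' l else 0)) =
            (\<Sum>l\<in>{1..n-2}. (if l = j then a l else 0) + (if j = n-1 then a l * b' l else 0))"
        using 1 n by (intro sum.cong) auto
      show ?thesis unfolding e s sum.distrib using 1 n i' j' by (auto simp: hm_def)
    next
      case 2
      have s: "(\<Sum>l\<in>{1..n-2}. (if i = l then 1 else if i = 0 then a l else 0) *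
                       (if l = j then 1 else if j = n-1 then b' l else 0)) = 0"
        using 2 n by (intro sum.neutral) auto
      show ?thesis unfolding e s using 2 n i' j' by (auto simp: hm_def)
    next
      case 3
      have s: "(\<Sum>l\<in>{1..n-2}. (if i = l then 1 else if i = 0 then a l else 0) *
                       (if l = j then 1 else if j = n-1 then b' l else 0)) =
            (\<Sum>l\<in>{1..n-2}. (if l = i then (if i = j then 1 else if j = n-1 then b' i else 0) else 0))"
        using 3 n by (intro sum.cong) auto
      show ?thesis unfolding e s using 3 n i' j' by (auto simp: hm_def)
    qed
  qed
qed (auto simp: hm_def)

lemma hm_id:
  assumes n: "n \<ge> 2" and a: "\<forall>k\<in>{1..n-2}. a k = 0" and b: "\<forall>k\<in>{1..n-2}. b k = 0"
  shows "hm n a b 0 = 1\<^sub>m n"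
proof (rule eq_matI)
  fix i j assume "i < dim_row (1\<^sub>m n)" "j < dim_col (1\<^sub>m n)"
  then have i: "i < n" and j: "j < n" by auto
  show "hm n a b 0 $$ (i, j) = 1\<^sub>m n $$ (i, j)"
  proof (cases "i = j")
    case True then show ?thesis using i j by (simp add: hm_def)
  next
    case False
    have "hm n a b 0 $$ (i, j) = 0"
    proof (cases "i = 0")
      case True
      then show ?thesis using False i j n a by (auto simp: hm_def)
    next
      case f2: False
      then show ?thesis using False i j n b by (auto simp: hm_def)
    qed
    then show ?thesis using False i j by simp
  qed
qed (auto simp: hm_def)

lemma heis_hm:
  assumes n: "n \<ge> 2" and M: "M \<in> heis n"
  shows "M = hm n (psi_a n M) (psi_b n M) (psi_c n M)"
proof (rule eq_matI)
  have Mc: "M \<in> carrier_mat n n" using M by (simp add: heis_def)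
  have H: "\<forall>i<n. \<forall>j<n. (if i = j then M $$ (i, j) = 1
         else if i = 0 \<or> j = n - 1 then gauss_rat (M $$ (i, j))
         else M $$ (i, j) = 0)" using M by (simp add: heis_def)
  fix i j assume "i < dim_row (hm n (psi_a n M) (psi_b n M) (psi_c n M))"
    "j < dim_col (hm n (psi_a n M) (psi_b n M) (psi_c n M))"
  then have i: "i < n" and j: "j < n" by (simp_all add: hm_def)
  have h: "(if i = j then M $$ (i, j) = 1
         else if i = 0 \<or> j = n - 1 then gauss_rat (M $$ (i, j))
         else M $$ (i, j) = 0)" using H i j by blast
  show "M $$ (i, j) = hm n (psi_a n M) (psi_b n M) (psi_c n M) $$ (i, j)"
    using h i j n by (auto simp: hm_def psi_a_def psi_b_def psi_c_def split: if_splits)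
qed (use M in \<open>auto simp: hm_def heis_def\<close>)

lemma gs_carrier:
  assumes "S \<subseteq> carrier_mat n n" "A \<in> gen_semigroup S"
  shows "A \<in> carrier_mat n n"
  using assms(2) by induction (use assms(1) in auto)

lemma gs_left:
  assumes S: "S \<subseteq> carrier_mat n n" and A: "A \<in> gen_semigroup S" and X: "X \<in> S"
  shows "X * A \<in> gen_semigroup S"
  using A
proof induction
  case (base M)
  then show ?case using X by (intro gen_semigroup.step gen_semigroup.base)
next
  case (step A M)
  have "X * (A * M) = (X * A) * M"
    using S X step gs_carrier[OF S step(1)] by (intro assoc_mult_mat[symmetric]) auto
  then show ?case using step by (simp add: gen_semigroup.step)
qed

context
  fixes n :: nat and G :: "nat \<Rightarrow> complex mat"
begin

definition dt :: "(nat\<Rightarrow>complex) \<Rightarrow> (nat\<Rightarrow>complex) \<Rightarrow> complex" where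
  "dt f g = (\<Sum>k\<in>{1..n-2}. f k * g k)"

fun wa :: "nat list \<Rightarrow> nat \<Rightarrow> complex" where
  "wa [] k = 0"
| "wa (j#w) k = psi_a n (G j) k + wa w k"

fun wb :: "nat list \<Rightarrow> nat \<Rightarrow> complex" where
  "wb [] k = 0"
| "wb (j#w) k = psi_b n (G j) k + wb w k"

fun cv :: "nat list \<Rightarrow> complex" where
  "cv [] = 0"
| "cv (j#w) = psi_c n (G j) + cv w + dt (psi_a n (G j)) (wb w)"

fun pm :: "nat list \<Rightarrow> complex mat" where
  "pm [] = 1\<^sub>m n"
| "pm (j#w) = G j * pm w"

lemma wa_Cons_fun: "wa (j#w) = (\<lambda>k. psi_a n (G j) k + wa w k)" by (rule ext) simp
lemma wb_Cons_fun: "wb (j#w) = (\<lambda>k. psi_b n (G j) k + wb w k)" by (rule ext) simp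

lemma pm_hm:
  assumes n: "n \<ge> 2" and H: "\<forall>j\<in>set w. G j \<in> heis n"
  shows "pm w = hm n (wa w) (wb w) (cv w)"
  using H
proof (induction w)
  case Nil
  have "hm n (\<lambda>_. 0) (\<lambda>_. 0) 0 = 1\<^sub>m n" by (rule hm_id[OF n]) auto
  then show ?case by simp
next
  case (Cons j w)
  have "pm (j#w) = hm n (psi_a n (G j)) (psi_b n (G j)) (psi_c n (G j)) * hm n (wa w) (wb w) (cv w)"
    using Cons heis_hm[OF n, of "G j"] by simp
  also have "\<dots> = hm n (wa (j#w)) (wb (j#w)) (cv (j#w))"
    unfolding hm_mult[OF n] wa_Cons_fun wb_Cons_fun by (simp add: dt_def)
  finally show ?case .
qed

lemma pm_gs:
  assumes C: "\<forall>j<t. G j \<in> carrier_mat n n" and w: "w \<noteq> []" "set w \<subseteq> {..<t}"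
  shows "pm w \<in> gen_semigroup (G ` {..<t})"
  using w
proof (induction w)
  case Nil then show ?case by simp
next
  case (Cons j w)
  have S: "G ` {..<t} \<subseteq> carrier_mat n n" using C by auto
  have jt: "j < t" using Cons by simp
  show ?case
  proof (cases "w = []")
    case True
    have "G j * 1\<^sub>m n = G j" using C jt by (metis right_mult_one_mat)
    then show ?thesis using True jt by (simp add: gen_semigroup.base)
  next
    case False
    then show ?thesis using Cons jt by (simp add: gs_left[OF S])
  qed
qed


lemma wa_append: "wa (u@v) = (\<lambda>k. wa u k + wa v k)"
  by (induction u) (auto simp: fun_eq_iff)
lemma wb_append: "wb (u@v) = (\<lambda>k. wb u k + wb v k)"
  by (induction u) (auto simp: fun_eq_iff)

lemma dt_add1: "dt (\<lambda>k. f k + g k) h = dt f h + dt g h"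
  by (simp add: dt_def distrib_right sum.distrib)
lemma dt_add2: "dt h (\<lambda>k. f k + g k) = dt h f + dt h g"
  by (simp add: dt_def distrib_left sum.distrib)
lemma dt_smult1: "dt (\<lambda>k. x * f k) h = x * dt f h"
  by (simp add: dt_def sum_distrib_left mult.assoc)
lemma dt_smult2: "dt h (\<lambda>k. x * f k) = x * dt h f"
  by (simp add: dt_def sum_distrib_left mult.left_commute)
lemma dt_zero2: "dt h (\<lambda>k. 0) = 0"
  by (simp add: dt_def)
lemma dt_cong1: "(\<forall>k\<in>{1..n-2}. f k = f' k) \<Longrightarrow> dt f g = dt f' g"
  by (simp add: dt_def)
lemma dt_cong2: "(\<forall>k\<in>{1..n-2}. f k = f' k) \<Longrightarrow> dt g f = dt g f'"
  by (simp add: dt_def)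
lemma dt_neg1: "dt (\<lambda>k. - f k) h = - dt f h"
  by (simp add: dt_def sum_negf)
lemma dt_neg2: "dt h (\<lambda>k. - f k) = - dt h f"
  by (simp add: dt_def sum_negf)

lemma cv_append: "cv (u@v) = cv u + cv v + dt (wa u) (wb v)"
proof (induction u)
  case Nil then show ?case by (simp add: dt_def)
next
  case (Cons j u)
  show ?case using Cons
    by (simp add: wb_append wa_Cons_fun dt_add1 dt_add2 algebra_simps)
qed

definition pw :: "nat \<Rightarrow> nat list \<Rightarrow> nat list" where
  "pw m w = concat (replicate m w)"

lemma pw_0[simp]: "pw 0 w = []" by (simp add: pw_def)
lemma pw_Suc: "pw (Suc m) w = w @ pw m w" by (simp add: pw_def)
lemma set_pw: "set (pw m w) \<subseteq> set w" by (auto simp: pw_def)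

lemma wa_pw: "wa (pw m w) = (\<lambda>k. of_nat m * wa w k)"
  by (induction m) (auto simp: pw_Suc wa_append fun_eq_iff algebra_simps)
lemma wb_pw: "wb (pw m w) = (\<lambda>k. of_nat m * wb w k)"
  by (induction m) (auto simp: pw_Suc wb_append fun_eq_iff algebra_simps)

lemma cv_pw: "cv (pw m w) = of_nat m * cv w + of_nat m * (of_nat m - 1) / 2 * dt (wa w) (wb w)"
proof (induction m)
  case 0 then show ?case by simp
next
  case (Suc m)
  show ?case unfolding pw_Suc cv_append Suc wb_pw dt_smult2
    by (simp add: field_simps)
qed

lemma wb_Nil_fun: "wb [] = (\<lambda>k. 0)" by (simp add: fun_eq_iff)
lemma wa_single: "wa [p] = psi_a n (G p)" by (simp add: fun_eq_iff)
lemma wb_single: "wb [p] = psi_b n (G p)" by (simp add: fun_eq_iff)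
lemma cv_single: "cv [p] = psi_c n (G p)" by (simp add: dt_def)

lemma pair_word:
  assumes zp: "\<forall>k\<in>{1..n-2}. wa (p#rp) k = 0 \<and> wb (p#rp) k = 0"
    and zq: "\<forall>k\<in>{1..n-2}. wa (q#rq) k = 0 \<and> wb (q#rq) k = 0"
    and jk: "j \<le> k"
  shows "cv (pw j [p] @ pw k [q] @ pw (k-j) [p] @ pw k rp @ pw k rq) =
     of_nat k * (cv (p#rp) + cv (q#rq)) +
     of_nat j * of_nat k * (dt (psi_a n (G p)) (psi_b n (G q)) - dt (psi_a n (G q)) (psi_b n (G p)))"
proof -
  have ap: "dt (wa rp) g = - dt (psi_a n (G p)) g" for g
    using zp by (subst dt_cong1[where f' = "\<lambda>k. - psi_a n (G p) k"]) (auto simp: dt_neg1 add_eq_0_iff2)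
  have bp: "dt g (wb rp) = - dt g (psi_b n (G p))" for g
    using zp by (subst dt_cong2[where f' = "\<lambda>k. - psi_b n (G p) k"]) (auto simp: dt_neg2 add_eq_0_iff2)
  have aq: "dt (wa rq) g = - dt (psi_a n (G q)) g" for g
    using zq by (subst dt_cong1[where f' = "\<lambda>k. - psi_a n (G q) k"]) (auto simp: dt_neg1 add_eq_0_iff2)
  have bq: "dt g (wb rq) = - dt g (psi_b n (G q))" for g
    using zq by (subst dt_cong2[where f' = "\<lambda>k. - psi_b n (G q) k"]) (auto simp: dt_neg2 add_eq_0_iff2)
  have kj: "(of_nat (k - j) :: complex) = of_nat k - of_nat j" using jk by (simp add: of_nat_diff)
  show ?thesis
    apply (simp only: cv_append wa_append wb_append wa_pw wb_pw cv_pw dt_add1 dt_add2 dt_smult1 dt_smult2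
        wa_single wb_single cv_single ap bp aq bq kj cv.simps(2) append_assoc)
    apply (simp add: field_simps wb_Nil_fun dt_zero2)
    done
qed

definition zs :: "nat list \<Rightarrow> bool" where
  "zs w \<longleftrightarrow> (\<forall>k\<in>{1..n-2}. wa w k = 0 \<and> wb w k = 0)"

lemma zs_append: "zs u \<Longrightarrow> zs v \<Longrightarrow> zs (u@v)"
  by (simp add: zs_def wa_append wb_append)
lemma zs_pw: "zs w \<Longrightarrow> zs (pw m w)"
  by (simp add: zs_def wa_pw wb_pw)

lemma dt_zs: "zs u \<Longrightarrow> dt (wa u) g = 0"
  by (simp add: zs_def dt_def)

lemma cv_append_zs: "zs u \<Longrightarrow> cv (u@v) = cv u + cv v"
  by (simp add: cv_append dt_zs)

lemma cv_pw_zs: "zs w \<Longrightarrow> cv (pw m w) = of_nat m * cv w"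
  by (simp add: cv_pw dt_zs)

lemma wa_replicate: "wa (replicate m j) k = of_nat m * psi_a n (G j) k"
  by (induction m) (auto simp: algebra_simps)
lemma wb_replicate: "wb (replicate m j) k = of_nat m * psi_b n (G j) k"
  by (induction m) (auto simp: algebra_simps)

lemma wa_cm: "wa (concat (map (\<lambda>j. replicate (x j) j) l)) k = (\<Sum>j\<leftarrow>l. of_nat (x j) * psi_a n (G j) k)"
  by (induction l) (auto simp: wa_append wa_replicate)
lemma wb_cm: "wb (concat (map (\<lambda>j. replicate (x j) j) l)) k = (\<Sum>j\<leftarrow>l. of_nat (x j) * psi_b n (G j) k)"
  by (induction l) (auto simp: wb_append wb_replicate)

lemma nr_word:
  assumes nr: "non_redundant n t G p" and pt: "p < t"
  shows "\<exists>r. set r \<subseteq> {..<t} \<and> zs (p#r)"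
proof -
  obtain x where x: "x p \<ge> 1"
    "\<forall>k\<in>{1..n-2}. (\<Sum>j<t. of_nat (x j) * psi_a n (G j) k) = 0"
    "\<forall>k\<in>{1..n-2}. (\<Sum>j<t. of_nat (x j) * psi_b n (G j) k) = 0"
    using nr unfolding non_redundant_def by blast
  define w where "w = concat (map (\<lambda>j. replicate (x j) j) [0..<t])"
  have sw: "set w \<subseteq> {..<t}" by (auto simp: w_def)
  have "p \<in> set w" using x(1) pt by (auto simp: w_def)
  then obtain u v where uv: "w = u @ p # v" by (metis split_list)
  have su: "(\<Sum>j\<leftarrow>[0..<t]. f j) = (\<Sum>j<t. f j)" for f :: "nat \<Rightarrow> complex"
    by (simp add: sum_set_upt_conv_sum_list_nat[symmetric] atLeast0LessThan)
  have zw: "zs w" unfolding zs_def w_def wa_cm wb_cm su using x(2,3) by blast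
  have "zs (p # (v @ u))"
    using zw unfolding uv zs_def by (simp add: wa_append wb_append algebra_simps)
  moreover have "set (v @ u) \<subseteq> {..<t}" using sw uv by auto
  ultimately show ?thesis by blast
qed

lemma signed_pair:
  assumes zp: "zs (p#rp)" and zq: "zs (q#rq)"
    and st: "set (p#rp) \<subseteq> {..<t}" "set (q#rq) \<subseteq> {..<t}"
    and sk: "\<bar>s\<bar> \<le> int k" and k1: "k \<ge> 1"
  shows "\<exists>w. w \<noteq> [] \<and> set w \<subseteq> {..<t} \<and> zs w \<and>
     cv w = of_nat k * (cv (p#rp) + cv (q#rq)) +
       of_int s * of_nat k * (dt (psi_a n (G p)) (psi_b n (G q)) - dt (psi_a n (G q)) (psi_b n (G p)))"
proof -
  have gen: "\<exists>w. w \<noteq> [] \<and> set w \<subseteq> {..<t} \<and> zs w \<and>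
     cv w = of_nat k * (cv (p'#rp') + cv (q'#rq')) +
       of_nat j * of_nat k * (dt (psi_a n (G p')) (psi_b n (G q')) - dt (psi_a n (G q')) (psi_b n (G p')))"
    if zp': "zs (p'#rp')" and zq': "zs (q'#rq')"
      and st': "set (p'#rp') \<subseteq> {..<t}" "set (q'#rq') \<subseteq> {..<t}" and jk: "j \<le> k" for p' rp' q' rq' j
  proof -
    define W where "W = pw j [p'] @ pw k [q'] @ pw (k-j) [p'] @ pw k rp' @ pw k rq'"
    have kj: "(of_nat (k - j) :: complex) = of_nat k - of_nat j" using jk by (simp add: of_nat_diff)
    have wa: "wa W i = of_nat k * wa (p'#rp') i + of_nat k * wa (q'#rq') i" for i
      unfolding W_def by (simp add: wa_append wa_pw kj algebra_simps)
    have wb: "wb W i = of_nat k * wb (p'#rp') i + of_nat k * wb (q'#rq') i" for i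
      unfolding W_def by (simp add: wb_append wb_pw kj algebra_simps)
    have "zs W" using zp' zq' unfolding zs_def wa wb by simp
    moreover have "W \<noteq> []" using k1 unfolding W_def by (cases k) (auto simp: pw_Suc)
    moreover have "set W \<subseteq> {..<t}" using st' set_pw unfolding W_def by fastforce
    moreover have "cv W = of_nat k * (cv (p'#rp') + cv (q'#rq')) +
       of_nat j * of_nat k * (dt (psi_a n (G p')) (psi_b n (G q')) - dt (psi_a n (G q')) (psi_b n (G p')))"
      unfolding W_def by (rule pair_word) (use zp' zq' jk in \<open>auto simp: zs_def\<close>)
    ultimately show ?thesis by blast
  qed
  show ?thesis
  proof (cases "s \<ge> 0")
    case True
    have "nat s \<le> k" using sk True by simp
    from gen[OF zp zq st this] show ?thesis using True by simp
  next
    case False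
    have "nat (-s) \<le> k" using sk False by simp
    from gen[OF zq zp st(2) st(1) this] obtain w where w: "w \<noteq> []" "set w \<subseteq> {..<t}" "zs w"
      "cv w = of_nat k * (cv (q#rq) + cv (p#rp)) +
       of_nat (nat (-s)) * of_nat k * (dt (psi_a n (G q)) (psi_b n (G p)) - dt (psi_a n (G p)) (psi_b n (G q)))"
      by blast
    have "(of_nat (nat (-s)) :: complex) = - of_int s" using False by simp
    then have "cv w = of_nat k * (cv (p#rp) + cv (q#rq)) +
       of_int s * of_nat k * (dt (psi_a n (G p)) (psi_b n (G q)) - dt (psi_a n (G q)) (psi_b n (G p)))"
      using w(4) by (simp add: algebra_simps)
    then show ?thesis using w by blast
  qed
qed

lemma gr_dt: "(\<And>k. k \<in> {1..n-2} \<Longrightarrow> gauss_rat (f k) \<and> gauss_rat (g k)) \<Longrightarrow> gauss_rat (dt f g)"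
  unfolding dt_def by (rule gr_sum) (auto intro: gr_mult)

lemma gr_psi:
  assumes "G j \<in> heis n" "k \<in> {1..n-2}"
  shows "gauss_rat (psi_a n (G j) k)" "gauss_rat (psi_b n (G j) k)" "gauss_rat (psi_c n (G j))"
proof -
  have H: "\<forall>i<n. \<forall>l<n. (if i = l then G j $$ (i, l) = 1
         else if i = 0 \<or> l = n - 1 then gauss_rat (G j $$ (i, l))
         else G j $$ (i, l) = 0)" using assms(1) by (simp add: heis_def)
  have k: "k < n" "k \<noteq> 0" "k \<noteq> n - 1" "n - 1 \<noteq> 0" "n - 1 < n" using assms(2) by auto
  have n0: "0 < n" using k by simp
  show "gauss_rat (psi_a n (G j) k)" using H[rule_format, OF n0 k(1)] k unfolding psi_a_def by simp
  show "gauss_rat (psi_b n (G j) k)" using H[rule_format, OF k(1) k(5)] k unfolding psi_b_def by simp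
  show "gauss_rat (psi_c n (G j))" using H[rule_format, OF n0 k(5)] k unfolding psi_c_def by simp
qed

lemma gr_wb: "\<forall>j\<in>set w. G j \<in> heis n \<Longrightarrow> k \<in> {1..n-2} \<Longrightarrow> gauss_rat (wb w k)"
  by (induction w) (auto simp: gr_0 intro!: gr_add gr_psi)

lemma gr_cv: "\<forall>j\<in>set w. G j \<in> heis n \<Longrightarrow> n \<ge> 3 \<Longrightarrow> gauss_rat (cv w)"
proof (induction w)
  case Nil then show ?case by (simp add: gr_0)
next
  case (Cons j w)
  have "gauss_rat (psi_c n (G j))" using Cons(2) Cons(3) by (intro gr_psi[of j 1]) auto
  moreover have "gauss_rat (dt (psi_a n (G j)) (wb w))"
    using Cons by (intro gr_dt) (auto intro: gr_psi gr_wb)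
  ultimately show ?case using Cons by (auto intro!: gr_add)
qed
end




theorem lemma5:
  fixes n t :: nat and G :: "nat \<Rightarrow> complex mat"
    and M1 M2 M3 M4 :: "complex mat"
  assumes "n \<ge> 2"
    and "\<forall>i<t. G i \<in> heis n"
    and "\<forall>i<t. non_redundant n t G i"
    and "M1 \<in> G ` {..<t}" "M2 \<in> G ` {..<t}" "M3 \<in> G ` {..<t}" "M4 \<in> G ` {..<t}"
    and "\<not> same_angle (heis_comm n M1 M2) (heis_comm n M3 M4)"
  shows "1\<^sub>m n \<in> gen_semigroup (G ` {..<t})"
proof -
  note n2 = assms(1) and H = assms(2) and NR = assms(3)
  obtain i1 where i1: "i1 < t" "M1 = G i1" using assms(4) by blast
  obtain i2 where i2: "i2 < t" "M2 = G i2" using assms(5) by blast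
  obtain i3 where i3: "i3 < t" "M3 = G i3" using assms(6) by blast
  obtain i4 where i4: "i4 < t" "M4 = G i4" using assms(7) by blast
  define z1 where "z1 = dt n (psi_a n (G i1)) (psi_b n (G i2)) - dt n (psi_a n (G i2)) (psi_b n (G i1))"
  define z3 where "z3 = dt n (psi_a n (G i3)) (psi_b n (G i4)) - dt n (psi_a n (G i4)) (psi_b n (G i3))"
  have hc1: "heis_comm n M1 M2 = z1" unfolding z1_def i1 i2 heis_comm_def dt_def ..
  have hc3: "heis_comm n M3 M4 = z3" unfolding z3_def i3 i4 heis_comm_def dt_def ..
  have nsa: "\<not> same_angle z1 z3" using assms(8) hc1 hc3 by simp
  have n3: "n \<ge> 3"
  proof (rule ccontr)
    assume "\<not> n \<ge> 3"
    then have "{1..n-2} = {}" by auto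
    then have "z1 = 0" unfolding z1_def dt_def by simp
    then show False using nsa by (simp add: same_angle_def)
  qed
  have Im: "Im (z1 * cnj z3) \<noteq> 0" by (rule not_same_angle_Im[OF nsa])
  obtain r1 where r1: "set r1 \<subseteq> {..<t}" "zs n G (i1#r1)" using nr_word NR i1(1) by blast
  obtain r2 where r2: "set r2 \<subseteq> {..<t}" "zs n G (i2#r2)" using nr_word NR i2(1) by blast
  obtain r3 where r3: "set r3 \<subseteq> {..<t}" "zs n G (i3#r3)" using nr_word NR i3(1) by blast
  obtain r4 where r4: "set r4 \<subseteq> {..<t}" "zs n G (i4#r4)" using nr_word NR i4(1) by blast
  have s1: "set (i1#r1) \<subseteq> {..<t}" using r1 i1 by auto
  have s2: "set (i2#r2) \<subseteq> {..<t}" using r2 i2 by auto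
  have s3: "set (i3#r3) \<subseteq> {..<t}" using r3 i3 by auto
  have s4: "set (i4#r4) \<subseteq> {..<t}" using r4 i4 by auto
  define X where "X = (i1#r1) @ (i2#r2) @ (i3#r3) @ (i4#r4)"
  have sX: "set X \<subseteq> {..<t}" using s1 s2 s3 s4 unfolding X_def by auto
  have zX: "zs n G X" unfolding X_def using r1 r2 r3 r4 by (intro zs_append)
  define S where "S = cv n G (i1#r1) + cv n G (i2#r2) + cv n G (i3#r3) + cv n G (i4#r4)"
  have "cv n G X = cv n G (i1#r1) + (cv n G (i2#r2) + (cv n G (i3#r3) + cv n G (i4#r4)))"
    unfolding X_def by (simp only: cv_append_zs[OF r1(2)] cv_append_zs[OF r2(2)] cv_append_zs[OF r3(2)])
  then have cX: "cv n G X = S" unfolding S_def by (simp add: add.assoc)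
  have HX: "\<forall>j\<in>set w. G j \<in> heis n" if "set w \<subseteq> {..<t}" for w using that H by auto
  have gS: "gauss_rat S" unfolding cX[symmetric] by (rule gr_cv[OF HX[OF sX] n3])
  have ga: "gauss_rat (dt n (psi_a n (G p)) (psi_b n (G q)))" if "p < t" "q < t" for p q
    by (rule gr_dt) (use that H in \<open>auto intro: gr_psi\<close>)
  have g1: "gauss_rat z1" unfolding z1_def using i1 i2 by (intro gr_diff ga)
  have g3: "gauss_rat z3" unfolding z3_def using i3 i4 by (intro gr_diff ga)
  obtain Q P1 P3 where Q: "Q > (0::int)" "of_int Q * S = of_int P1 * z1 + of_int P3 * z3"
    using decomp[OF Im g1 g3 gS] by blast
  define k where "k = nat (max \<bar>P1\<bar> \<bar>P3\<bar>) + 1"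
  have k1: "k \<ge> 1" by (simp add: k_def)
  have kP1: "\<bar>- P1\<bar> \<le> int k" and kP3: "\<bar>- P3\<bar> \<le> int k" by (auto simp: k_def)
  obtain w1 where w1: "w1 \<noteq> []" "set w1 \<subseteq> {..<t}" "zs n G w1"
    "cv n G w1 = of_nat k * (cv n G (i1#r1) + cv n G (i2#r2)) + of_int (- P1) * of_nat k * z1"
    using signed_pair[OF r1(2) r2(2) s1 s2 kP1 k1] unfolding z1_def by blast
  obtain w3 where w3: "w3 \<noteq> []" "set w3 \<subseteq> {..<t}" "zs n G w3"
    "cv n G w3 = of_nat k * (cv n G (i3#r3) + cv n G (i4#r4)) + of_int (- P3) * of_nat k * z3"
    using signed_pair[OF r3(2) r4(2) s3 s4 kP3 k1] unfolding z3_def by blast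
  define E where "E = pw ((nat Q - 1) * k) X"
  have zE: "zs n G E" unfolding E_def by (rule zs_pw[OF zX])
  have sE: "set E \<subseteq> {..<t}" unfolding E_def using set_pw sX by blast
  have Q1: "nat Q \<ge> 1" using Q(1) by simp
  have "(of_nat (nat Q - 1) :: complex) = of_nat (nat Q) - 1" using Q1 by (simp add: of_nat_diff)
  also have "\<dots> = of_int Q - 1" using Q(1) by (simp add: of_nat_nat)
  finally have qq: "(of_nat (nat Q - 1) :: complex) = of_int Q - 1" .
  have cE: "cv n G E = (of_int Q - 1) * of_nat k * S"
    unfolding E_def cv_pw_zs[OF zX] cX of_nat_mult qq by (simp add: algebra_simps)
  define T where "T = w1 @ w3 @ E"
  have zT: "zs n G T" unfolding T_def using w1 w3 zE by (intro zs_append)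
  have cT: "cv n G T = of_nat k * (of_int Q * S - of_int P1 * z1 - of_int P3 * z3)"
  proof -
    have "cv n G T = cv n G w1 + (cv n G w3 + cv n G E)"
      unfolding T_def by (simp only: cv_append_zs[OF w1(3)] cv_append_zs[OF w3(3)])
    also have "\<dots> = of_nat k * (of_int Q * S - of_int P1 * z1 - of_int P3 * z3)"
      unfolding w1(4) w3(4) cE S_def by (simp add: algebra_simps)
    finally show ?thesis .
  qed
  have cT0: "cv n G T = 0" unfolding cT Q(2) by simp
  have sT: "set T \<subseteq> {..<t}" unfolding T_def using w1 w3 sE by auto
  have "pm n G T = hm n (wa n G T) (wb n G T) (cv n G T)"
    by (rule pm_hm[OF n2 HX[OF sT]])
  also have "\<dots> = 1\<^sub>m n" unfolding cT0 using zT unfolding zs_def by (intro hm_id[OF n2]) auto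
  finally have "pm n G T = 1\<^sub>m n" .
  moreover have "pm n G T \<in> gen_semigroup (G ` {..<t})"
    by (rule pm_gs) (use H w1 sT in \<open>auto simp: T_def heis_def\<close>)
  ultimately show ?thesis by simp
qed


end
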